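(* Let $\mathcal B$ be a bimachine realizing a transduction $f$. Then $\mathit{Left}_f(\mathit{Right}_f(\mathcal B))$ and $\mathit{Right}_f(\mathit{Left}_f(\mathcal B))$ are minimal bimachines realizing $f$, and moreover $\mathcal B\sqsubseteq\mathit{Left}_f(\mathit{Right}_f(\mathcal B))$ and $\mathcal B\sqsubseteq\mathit{Right}_f(\mathit{Left}_f(\mathcal B))$.
   Context: Notation: $u^{-1}v$ is the word $v'$ with $uv'=v$; $\bigwedge L$ is the longest common prefix of $L$ ($\bigwedge\emptyset=\varepsilon$). Transductions are partial functions $f:\Sigma^*\to\Sigma^*$. A left automaton is a complete deterministic automaton $\mathcal L$ with initial $l_0$; $[u]_{\mathcal L}$ is the state reached on $u$; $u\sim_{\mathcal L}v$ iff $[u]_{\mathcal L}=[v]_{\mathcal L}$. A right automaton $\mathcal R$ with initial state $r_0$ is backward deterministic and backward complete and reads words from right to left: $[u]_{\mathcal R}$ is the unique $p$ with a run on $u$ from $p$ to $r_0$, $u$ accepted iff $[u]_{\mathcal R}$ final, $u\sim_{\mathcal R}v$ iff $[u]_{\mathcal R}=[v]_{\mathcal R}$. For automata of the same kind, $\mathcal A_1\sqsubseteq\mathcal A_2$ means ${\sim_{\mathcal A_1}}\subseteq{\sim_{\mathcal A_2}}$. A bimachine $\mathcal B=(\mathcal L,\mathcal R,\omega,\lambda,\rho)$: left automaton $\mathcal L$ and right automaton $\mathcal R$ accepting the same language, $\omega:Q_{\mathcal L}\times\Sigma\times Q_{\mathcal R}\to\Sigma^*$, $\lambda$ on final states of $\mathcal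 R$, $\rho$ on final states of $\mathcal L$; it realizes $u=\sigma_1\cdots\sigma_n\mapsto \lambda([u]_{\mathcal R})\prod_{k=1}^n\omega([\sigma_1\cdots\sigma_{k-1}]_{\mathcal L},\sigma_k,[\sigma_{k+1}\cdots\sigma_n]_{\mathcal R})\,\rho([u]_{\mathcal L})$ on the accepted language. $\mathcal B_1\sqsubseteq\mathcal B_2$ iff $\mathcal L_1\sqsubseteq\mathcal L_2$ and $\mathcal R_1\sqsubseteq\mathcal R_2$. A bimachine $\mathcal B$ realizing $f$ is minimal if there is no bimachine $\mathcal B'$ realizing $f$ with $\mathcal B\sqsubseteq\mathcal B'$ and $\mathcal B'\not\sqsubseteq\mathcal B$. Left minimization: for $\mathcal B$ with right automaton $\mathcal R$ realizing $f$, let $\widehat f_{[w]_{\mathcal R}}(u)=\bigwedge\{f(uv)\mid v\sim_{\mathcal R}w,\,uv\in\mathrm{dom}(f)\}$ and $u\sim_Lv$ iff for all $w$, $uw\in\mathrm{dom}f\Leftrightarrow vw\in\mathrm{dom}f$ and, if $uw\in\mathrm{dom}f$, $\widehat f_{[w]_{\mathcal R}}(u)^{-1}f(uw)=\widehat f_{[w]_{\mathcal R}}(v)^{-1}f(vw)$. $\mathit{Left}_f(\mathcal R)$ is the deterministic automaton on $\Sigma^*/{\sim_L}$ with transitions $([u],\sigma,[u\sigma])$, initial $[\varepsilon]$, finals $\{[u]\mid u\in\mathrm{dom}f\}$. $\mathit{Left}_f(\mathcal B)$ is the bimachine $(\mathit{Left}_f(\mathcal R),\mathcal R,\omega',\lambda',\rho')$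 with $\omega'([u]_L,\sigma,[w]_{\mathcal R})=\widehat f_{[\sigma w]_{\mathcal R}}(u)^{-1}\widehat f_{[w]_{\mathcal R}}(u\sigma)$, $\lambda'([w]_{\mathcal R})=\widehat f_{[w]_{\mathcal R}}(\varepsilon)$, $\rho'([u]_L)=\widehat f_{[\varepsilon]_{\mathcal R}}(u)^{-1}f(u)$; it realizes $f$. $\mathit{Right}_f(\mathcal B)$ (with left automaton that of $\mathcal B$ and right automaton $\mathit{Right}_f(\mathcal L)$) is defined symmetrically, by applying the mirror of this construction (to $w\mapsto\overline{f(\overline w)}$, $\overline{x}$ the mirror image of $x$, and the mirrored bimachine, then mirroring back). *)

theory Defs
  imports Main "HOL-Library.Sublist"
begin

definition lquot :: "'a list \<Rightarrow> 'a list \<Rightarrow> 'a list" where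
  "lquot u v = drop (length u) v"   \<comment> \<open>u^{-1} v (meaningful when u is a prefix of v)\<close>

definition lcp_set :: "'a list set \<Rightarrow> 'a list" where
  "lcp_set L = (if L = {} then []
     else (THE p. (\<forall>x\<in>L. prefix p x) \<and> (\<forall>q. (\<forall>x\<in>L. prefix q x) \<longrightarrow> prefix q p)))"

text \<open>Read as a left automaton it runs left-to-right; read as a right automaton,
  trans q \<sigma> is the unique state p with a transition (p,\<sigma>,q) (backward
  deterministic and backward complete), and words are read right-to-left.\<close>

record ('s, 'a) da =
  states :: "'s set"
  trans :: "'s \<Rightarrow> 'a \<Rightarrow> 's"
  init :: 's
  final :: "'s set"

definition da_wf :: "('s, 'a) da \<Rightarrow> bool" where
  "da_wf A \<longleftrightarrow> finite (states A) \<and> init A \<in> states A \<and> final A \<subseteq> states A \<and>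
     (\<forall>q\<in>states A. \<forall>\<sigma>. trans A q \<sigma> \<in> states A)"

definition lstate :: "('s, 'a) da \<Rightarrow> 'a list \<Rightarrow> 's" where
  "lstate A u = foldl (trans A) (init A) u"

definition rstate :: "('s, 'a) da \<Rightarrow> 'a list \<Rightarrow> 's" where
  "rstate A u = foldr (\<lambda>\<sigma> q. trans A q \<sigma>) u (init A)"

definition left_le :: "('s, 'a) da \<Rightarrow> ('t, 'a) da \<Rightarrow> bool" where
  "left_le A1 A2 \<longleftrightarrow> (\<forall>u v. lstate A1 u = lstate A1 v \<longrightarrow> lstate A2 u = lstate A2 v)"

definition right_le :: "('s, 'a) da \<Rightarrow> ('t, 'a) da \<Rightarrow> bool" where
  "right_le A1 A2 \<longleftrightarrow> (\<forall>u v. rstate A1 u = rstate A1 v \<longrightarrow> rstate A2 u = rstate A2 v)"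

record ('l, 'r, 'a) bimachine =
  lft :: "('l, 'a) da"
  rgt :: "('r, 'a) da"
  omega :: "'l \<Rightarrow> 'a \<Rightarrow> 'r \<Rightarrow> 'a list"
  lam :: "'r \<Rightarrow> 'a list"
  rho :: "'l \<Rightarrow> 'a list"

definition is_bimachine :: "('l, 'r, 'a) bimachine \<Rightarrow> bool" where
  "is_bimachine B \<longleftrightarrow> da_wf (lft B) \<and> da_wf (rgt B) \<and>
     (\<forall>u. lstate (lft B) u \<in> final (lft B) \<longleftrightarrow> rstate (rgt B) u \<in> final (rgt B))"

definition bm_run :: "('l, 'r, 'a) bimachine \<Rightarrow> 'a list \<Rightarrow> 'a list option" where
  "bm_run B u = (if lstate (lft B) u \<in> final (lft B) then
      Some (lam B (rstate (rgt B) u)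
        @ concat (map (\<lambda>k. omega B (lstate (lft B) (take k u)) (u ! k)
                                  (rstate (rgt B) (drop (Suc k) u))) [0..<length u])
        @ rho B (lstate (lft B) u))
    else None)"

definition realizes :: "('l, 'r, 'a) bimachine \<Rightarrow> ('a list \<Rightarrow> 'a list option) \<Rightarrow> bool" where
  "realizes B f \<longleftrightarrow> (\<forall>u. bm_run B u = f u)"

definition bm_le :: "('l1, 'r1, 'a) bimachine \<Rightarrow> ('l2, 'r2, 'a) bimachine \<Rightarrow> bool" where
  "bm_le B1 B2 \<longleftrightarrow> left_le (lft B1) (lft B2) \<and> right_le (rgt B1) (rgt B2)"

text \<open>Competitors are taken with
  states in nat (every finite automaton is isomorphic to one with states in nat, and
  the relations compared by the order only depend on the automata up to isomorphism).\<close>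

definition minimal_bm :: "('a list \<Rightarrow> 'a list option) \<Rightarrow> ('l, 'r, 'a) bimachine \<Rightarrow> bool" where
  "minimal_bm f B \<longleftrightarrow> is_bimachine B \<and> realizes B f \<and>
     \<not> (\<exists>B' :: (nat, nat, 'a) bimachine. is_bimachine B' \<and> realizes B' f \<and>
          bm_le B B' \<and> \<not> bm_le B' B)"

definition fhat :: "('a list \<Rightarrow> 'a list option) \<Rightarrow> ('r, 'a) da \<Rightarrow> 'r \<Rightarrow> 'a list \<Rightarrow> 'a list" where
  "fhat f R q u = lcp_set {y. \<exists>v. rstate R v = q \<and> f (u @ v) = Some y}"

definition simL :: "('a list \<Rightarrow> 'a list option) \<Rightarrow> ('r, 'a) da \<Rightarrow> 'a list \<Rightarrow> 'a list \<Rightarrow> bool" where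
  "simL f R u v \<longleftrightarrow> (\<forall>w. (f (u @ w) \<noteq> None \<longleftrightarrow> f (v @ w) \<noteq> None) \<and>
     (\<forall>x y. f (u @ w) = Some x \<longrightarrow> f (v @ w) = Some y \<longrightarrow>
        lquot (fhat f R (rstate R w) u) x = lquot (fhat f R (rstate R w) v) y))"

definition lclass :: "('a list \<Rightarrow> 'a list option) \<Rightarrow> ('r, 'a) da \<Rightarrow> 'a list \<Rightarrow> 'a list set" where
  "lclass f R u = {v. simL f R u v}"

definition rep :: "'a list set \<Rightarrow> 'a list" where
  "rep C = (SOME u. u \<in> C)"

definition left_da :: "('a list \<Rightarrow> 'a list option) \<Rightarrow> ('r, 'a) da \<Rightarrow> ('a list set, 'a) da" where
  "left_da f R = \<lparr> states = range (lclass f R),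
                   trans = (\<lambda>C \<sigma>. lclass f R (rep C @ [\<sigma>])),
                   init = lclass f R [],
                   final = {lclass f R u | u. f u \<noteq> None} \<rparr>"

definition left_bm :: "('a list \<Rightarrow> 'a list option) \<Rightarrow> ('r, 'a) da \<Rightarrow> ('a list set, 'r, 'a) bimachine" where
  "left_bm f R = \<lparr> lft = left_da f R, rgt = R,
     omega = (\<lambda>C \<sigma> q. lquot (fhat f R (trans R q \<sigma>) (rep C)) (fhat f R q (rep C @ [\<sigma>]))),
     lam = (\<lambda>q. fhat f R q []),
     rho = (\<lambda>C. case f (rep C) of None \<Rightarrow> [] | Some y \<Rightarrow> lquot (fhat f R (init R) (rep C)) y) \<rparr>"

definition Left_f :: "('a list \<Rightarrow> 'a list option) \<Rightarrow> ('l, 'r, 'a) bimachine \<Rightarrow> ('a list set, 'r, 'a) bimachine" where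
  "Left_f f B = left_bm f (rgt B)"

definition mirror_f :: "('a list \<Rightarrow> 'a list option) \<Rightarrow> 'a list \<Rightarrow> 'a list option" where
  "mirror_f f w = map_option rev (f (rev w))"

text \<open>Mirror of a bimachine: the right automaton becomes the left one (and vice versa);
  note rstate A u = lstate A (rev u), so the same data serve both readings.\<close>

definition mirror_bm :: "('l, 'r, 'a) bimachine \<Rightarrow> ('r, 'l, 'a) bimachine" where
  "mirror_bm B = \<lparr> lft = rgt B, rgt = lft B,
     omega = (\<lambda>r \<sigma> l. rev (omega B l \<sigma> r)),
     lam = (\<lambda>l. rev (rho B l)),
     rho = (\<lambda>r. rev (lam B r)) \<rparr>"

definition Right_f :: "('a list \<Rightarrow> 'a list option) \<Rightarrow> ('l, 'r, 'a) bimachine \<Rightarrow> ('l, 'a list set, 'a) bimachine" where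
  "Right_f f B = mirror_bm (Left_f (mirror_f f) (mirror_bm B))"

end

theory Submission
  imports Defs
begin


lemma lcp_set_LCP: assumes ne: "S \<noteq> {}" shows "lcp_set S = Longest_common_prefix S"
proof -
  have "(THE p. (\<forall>x\<in>S. prefix p x) \<and> (\<forall>q. (\<forall>x\<in>S. prefix q x) \<longrightarrow> prefix q p)) = Longest_common_prefix S"
  proof (rule the_equality)
    have c: "\<forall>x\<in>S. prefix (Longest_common_prefix S) x"
      using Longest_common_prefix_prefix by (intro ballI)
    moreover have "\<forall>q. (\<forall>x\<in>S. prefix q x) \<longrightarrow> prefix q (Longest_common_prefix S)"
      using Longest_common_prefix_max_prefix[OF ne] by (intro allI impI)
    ultimately show "(\<forall>x\<in>S. prefix (Longest_common_prefix S) x) \<and> (\<forall>q. (\<forall>x\<in>S. prefix q x) \<longrightarrow> prefix q (Longest_common_prefix S))"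
      by (rule conjI)
    fix p assume p: "(\<forall>x\<in>S. prefix p x) \<and> (\<forall>q. (\<forall>x\<in>S. prefix q x) \<longrightarrow> prefix q p)"
    have a: "prefix p (Longest_common_prefix S)" using p Longest_common_prefix_max_prefix[OF ne] by simp
    have b: "prefix (Longest_common_prefix S) p" using p c by simp
    show "p = Longest_common_prefix S" using a b by (rule prefix_order.antisym)
  qed
  then show ?thesis using ne by (simp add: lcp_set_def)
qed

lemma lcp_prefix: assumes "x \<in> S" shows "prefix (lcp_set S) x"
proof -
  have "S \<noteq> {}" using assms by auto
  then show ?thesis using assms lcp_set_LCP Longest_common_prefix_prefix by metis
qed

lemma lcp_max: "S \<noteq> {} \<Longrightarrow> \<forall>x\<in>S. prefix p x \<Longrightarrow> prefix p (lcp_set S)"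
  using lcp_set_LCP Longest_common_prefix_max_prefix by metis

lemma lcp_eqI: assumes "S \<noteq> {}" "\<forall>x\<in>S. prefix p x" "\<And>q. \<forall>x\<in>S. prefix q x \<Longrightarrow> prefix q p"
   shows "lcp_set S = p"
proof (rule prefix_order.antisym)
  show "prefix (lcp_set S) p" using assms(3) lcp_prefix by blast
  show "prefix p (lcp_set S)" using assms(1,2) by (rule lcp_max)
qed

lemma lcp_prepend: assumes "S \<noteq> {}" shows "lcp_set ((@) a ` S) = a @ lcp_set S"
proof (rule lcp_eqI)
  show "(@) a ` S \<noteq> {}" using assms by auto
  show "\<forall>x\<in>(@) a ` S. prefix (a @ lcp_set S) x" using lcp_prefix by auto
  fix q assume q: "\<forall>x\<in>(@) a ` S. prefix q x"
  from assms obtain x0 where x0: "x0 \<in> S" by auto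
  have "prefix q (a @ x0)" using q x0 by auto
  then have "prefix q a \<or> prefix a q" using prefix_same_cases[of q "a @ x0" a] by simp
  then show "prefix q (a @ lcp_set S)"
  proof
    assume "prefix q a" then show ?thesis by (simp add: prefix_prefix)
  next
    assume "prefix a q" then obtain q' where q': "q = a @ q'" by (auto simp: prefix_def)
    have "\<forall>x\<in>S. prefix q' x" using q q' by auto
    then have "prefix q' (lcp_set S)" by (rule lcp_max[OF assms])
    then show ?thesis using q' by simp
  qed
qed

lemma lquot_app: "lquot (a @ b) (a @ c) = lquot b c"
  by (simp add: lquot_def)

lemma lcp_empty: "lcp_set {} = []" unfolding lcp_set_def by (rule if_P) (rule refl)

lemma lquot_self: "lquot a (a @ b) = b"
  by (simp add: lquot_def)

lemma lquot_prefix: "prefix a b \<Longrightarrow> a @ lquot a b = b"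
  unfolding prefix_def lquot_def by auto



lemma lstate_append: "lstate A (u @ v) = foldl (trans A) (lstate A u) v"
  by (simp add: lstate_def)

lemma rstate_append: "rstate A (u @ v) = foldr (\<lambda>\<sigma> q. trans A q \<sigma>) u (rstate A v)"
  by (simp add: rstate_def)

lemma rstate_Cons: "rstate A (\<sigma> # v) = trans A (rstate A v) \<sigma>"
  by (simp add: rstate_def)

lemma rstate_Nil: "rstate A [] = init A" by (simp add: rstate_def)
lemma lstate_Nil: "lstate A [] = init A" by (simp add: lstate_def)

lemma rstate_rev: "rstate A u = lstate A (rev u)"
  by (simp add: rstate_def lstate_def foldr_conv_foldl)

lemma left_le_right_le: "left_le A B \<longleftrightarrow> right_le A B"
proof
  assume "left_le A B" then show "right_le A B" unfolding left_le_def right_le_def rstate_rev by blast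
next
  assume h: "right_le A B"
  show "left_le A B" unfolding left_le_def
  proof (intro allI impI)
    fix u v assume "lstate A u = lstate A v"
    then have "rstate A (rev u) = rstate A (rev v)" by (simp add: rstate_rev)
    then have "rstate B (rev u) = rstate B (rev v)" using h unfolding right_le_def by blast
    then show "lstate B u = lstate B v" by (simp add: rstate_rev)
  qed
qed

lemma lstate_in: "da_wf A \<Longrightarrow> lstate A u \<in> states A"
proof (induction u rule: rev_induct)
  case Nil then show ?case by (simp add: da_wf_def lstate_def)
next
  case (snoc x xs) then show ?case by (simp add: da_wf_def lstate_def)
qed

lemma rstate_in: "da_wf A \<Longrightarrow> rstate A u \<in> states A"
  by (simp add: rstate_rev lstate_in)

lemma left_le_trans: "left_le A B \<Longrightarrow> left_le B C \<Longrightarrow> left_le A C"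
  unfolding left_le_def by blast
lemma right_le_trans: "right_le A B \<Longrightarrow> right_le B C \<Longrightarrow> right_le A C"
  unfolding right_le_def by blast
lemma left_le_refl: "left_le A A" unfolding left_le_def by blast
lemma right_le_refl: "right_le A A" unfolding right_le_def by blast

lemma simL_refl: "simL f R u u"
  unfolding simL_def by auto

lemma simL_sym: "simL f R u v \<Longrightarrow> simL f R v u"
  unfolding simL_def by metis

lemma simL_trans: assumes "simL f R u v" "simL f R v w" shows "simL f R u w"
  unfolding simL_def
proof (intro allI conjI impI)
  fix z
  show "(f (u @ z) \<noteq> None) = (f (w @ z) \<noteq> None)" using assms unfolding simL_def by metis
  fix x y assume x: "f (u @ z) = Some x" and y: "f (w @ z) = Some y"
  then obtain t where t: "f (v @ z) = Some t" using assms unfolding simL_def by (metis option.exhaust)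
  have "lquot (fhat f R (rstate R z) u) x = lquot (fhat f R (rstate R z) v) t"
    using assms(1) x t unfolding simL_def by blast
  also have "\<dots> = lquot (fhat f R (rstate R z) w) y"
    using assms(2) y t unfolding simL_def by blast
  finally show "lquot (fhat f R (rstate R z) u) x = lquot (fhat f R (rstate R z) w) y" .
qed

lemma lclass_eq_iff: "lclass f R u = lclass f R v \<longleftrightarrow> simL f R u v"
proof
  assume "lclass f R u = lclass f R v"
  then have "v \<in> lclass f R u" using simL_refl unfolding lclass_def by blast
  then show "simL f R u v" unfolding lclass_def by simp
next
  assume a: "simL f R u v"
  show "lclass f R u = lclass f R v"
  proof (rule set_eqI)
    fix w
    have "simL f R u w \<Longrightarrow> simL f R v w" by (rule simL_trans[OF simL_sym[OF a]])
    moreover have "simL f R v w \<Longrightarrow> simL f R u w" by (rule simL_trans[OF a])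
    ultimately show "w \<in> lclass f R u \<longleftrightarrow> w \<in> lclass f R v" unfolding lclass_def by blast
  qed
qed

lemma rep_lclass: "simL f R u (rep (lclass f R u))"
proof -
  have "u \<in> lclass f R u" unfolding lclass_def by (simp add: simL_refl)
  then have "rep (lclass f R u) \<in> lclass f R u" unfolding rep_def by (rule someI)
  then show ?thesis unfolding lclass_def by simp
qed

definition Sset where "Sset f R q u = {y. \<exists>v. rstate R v = q \<and> f (u @ v) = Some y}"

lemma fhat_Sset: "fhat f R q u = lcp_set (Sset f R q u)"
  by (simp add: fhat_def Sset_def)

definition Zset where "Zset f R q \<sigma> u =
  {lquot (fhat f R (trans R q \<sigma>) u) y | y v. rstate R v = q \<and> f (u @ \<sigma> # v) = Some y}"

lemma fhat_prefix: "f (u @ v) = Some y \<Longrightarrow> prefix (fhat f R (rstate R v) u) y"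
  unfolding fhat_Sset by (rule lcp_prefix) (auto simp: Sset_def)

lemma fhat_snoc:
  assumes ne: "Sset f R q (u @ [\<sigma>]) \<noteq> {}"
  shows "fhat f R q (u @ [\<sigma>]) = fhat f R (trans R q \<sigma>) u @ lcp_set (Zset f R q \<sigma> u)"
proof -
  let ?a = "fhat f R (trans R q \<sigma>) u"
  have eq: "Sset f R q (u @ [\<sigma>]) = (@) ?a ` Zset f R q \<sigma> u"
  proof (intro equalityI subsetI)
    fix y assume "y \<in> Sset f R q (u @ [\<sigma>])"
    then obtain v where v: "rstate R v = q" "f (u @ \<sigma> # v) = Some y" by (auto simp: Sset_def)
    have "prefix ?a y" using fhat_prefix[where f=f and R=R and v="\<sigma> # v", OF v(2)] v(1) by (simp add: rstate_Cons)
    then have "y = ?a @ lquot ?a y" by (simp add: lquot_prefix)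
    moreover have "lquot ?a y \<in> Zset f R q \<sigma> u" using v unfolding Zset_def by blast
    ultimately show "y \<in> (@) ?a ` Zset f R q \<sigma> u" by blast
  next
    fix z assume "z \<in> (@) ?a ` Zset f R q \<sigma> u"
    then obtain y v where yv: "z = ?a @ lquot ?a y" "rstate R v = q" "f (u @ \<sigma> # v) = Some y"
      unfolding Zset_def by blast
    have "prefix ?a y" using fhat_prefix[where f=f and R=R and v="\<sigma> # v", OF yv(3)] yv(2) by (simp add: rstate_Cons)
    then have "z = y" using yv(1) by (simp add: lquot_prefix)
    then show "z \<in> Sset f R q (u @ [\<sigma>])" using yv by (auto simp: Sset_def)
  qed
  have "Zset f R q \<sigma> u \<noteq> {}" using ne eq by auto
  then show ?thesis unfolding fhat_Sset[of f R q "u @ [\<sigma>]"] eq by (simp add: lcp_prepend fhat_Sset)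
qed

lemma Sset_ne_simL: assumes "simL f R u u'"
  shows "Sset f R q (u @ [\<sigma>]) \<noteq> {} \<longleftrightarrow> Sset f R q (u' @ [\<sigma>]) \<noteq> {}"
proof -
  have h: "\<And>w. (f (u @ w) \<noteq> None) = (f (u' @ w) \<noteq> None)" using assms unfolding simL_def by blast
  have "Sset f R q (a @ [\<sigma>]) \<noteq> {} \<longleftrightarrow> (\<exists>v. rstate R v = q \<and> f (a @ \<sigma> # v) \<noteq> None)" for a
    unfolding Sset_def by auto
  then show ?thesis using h by presburger
qed

lemma Zset_simL: assumes "simL f R u u'" shows "Zset f R q \<sigma> u = Zset f R q \<sigma> u'"
proof -
  have *: "Zset f R q \<sigma> a \<subseteq> Zset f R q \<sigma> b" if s: "simL f R a b" for a b
  proof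
    fix z assume "z \<in> Zset f R q \<sigma> a"
    then obtain y v where yv: "z = lquot (fhat f R (trans R q \<sigma>) a) y" "rstate R v = q"
       "f (a @ \<sigma> # v) = Some y" unfolding Zset_def by blast
    from s have "f (b @ \<sigma> # v) \<noteq> None" using yv(3) unfolding simL_def by blast
    then obtain y' where y': "f (b @ \<sigma> # v) = Some y'" by auto
    have "lquot (fhat f R (rstate R (\<sigma> # v)) a) y = lquot (fhat f R (rstate R (\<sigma> # v)) b) y'"
      using s yv(3) y' unfolding simL_def by blast
    then have "z = lquot (fhat f R (trans R q \<sigma>) b) y'" using yv by (simp add: rstate_Cons)
    then show "z \<in> Zset f R q \<sigma> b" using yv(2) y' unfolding Zset_def by blast
  qed
  show ?thesis using *[OF assms] *[OF simL_sym[OF assms]] by blast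
qed

lemma simL_snoc: assumes s: "simL f R u u'" shows "simL f R (u @ [\<sigma>]) (u' @ [\<sigma>])"
  unfolding simL_def
proof (intro allI conjI impI)
  fix w
  show "(f ((u @ [\<sigma>]) @ w) \<noteq> None) = (f ((u' @ [\<sigma>]) @ w) \<noteq> None)"
    using s unfolding simL_def by (metis append.assoc append_Cons append_Nil)
  fix x y assume x: "f ((u @ [\<sigma>]) @ w) = Some x" and y: "f ((u' @ [\<sigma>]) @ w) = Some y"
  let ?q = "rstate R w"
  let ?q' = "trans R ?q \<sigma>"
  have x': "f (u @ \<sigma> # w) = Some x" and y': "f (u' @ \<sigma> # w) = Some y" using x y by auto
  have neu: "Sset f R ?q (u @ [\<sigma>]) \<noteq> {}" using x unfolding Sset_def by blast
  have neu': "Sset f R ?q (u' @ [\<sigma>]) \<noteq> {}" using y unfolding Sset_def by blast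
  have px: "prefix (fhat f R ?q' u) x" using fhat_prefix[where f=f and R=R and v="\<sigma> # w", OF x'] by (simp add: rstate_Cons)
  have py: "prefix (fhat f R ?q' u') y" using fhat_prefix[where f=f and R=R and v="\<sigma> # w", OF y'] by (simp add: rstate_Cons)
  have zz: "lquot (fhat f R ?q' u) x = lquot (fhat f R ?q' u') y"
    using s x' y' unfolding simL_def by (metis rstate_Cons)
  have "lquot (fhat f R ?q (u @ [\<sigma>])) x
       = lquot (fhat f R ?q' u @ lcp_set (Zset f R ?q \<sigma> u)) (fhat f R ?q' u @ lquot (fhat f R ?q' u) x)"
    using fhat_snoc[OF neu] lquot_prefix[OF px] by simp
  also have "\<dots> = lquot (lcp_set (Zset f R ?q \<sigma> u)) (lquot (fhat f R ?q' u) x)" by (rule lquot_app)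
  also have "\<dots> = lquot (lcp_set (Zset f R ?q \<sigma> u')) (lquot (fhat f R ?q' u') y)"
    using zz Zset_simL[OF s] by simp
  also have "\<dots> = lquot (fhat f R ?q' u' @ lcp_set (Zset f R ?q \<sigma> u')) (fhat f R ?q' u' @ lquot (fhat f R ?q' u') y)"
    by (rule lquot_app[symmetric])
  also have "\<dots> = lquot (fhat f R ?q (u' @ [\<sigma>])) y"
    using fhat_snoc[OF neu'] lquot_prefix[OF py] by simp
  finally show "lquot (fhat f R ?q (u @ [\<sigma>])) x = lquot (fhat f R ?q (u' @ [\<sigma>])) y" .
qed

lemma lstate_left_da: "lstate (left_da f R) u = lclass f R u"
proof (induction u rule: rev_induct)
  case Nil then show ?case by (simp add: lstate_def left_da_def)
next
  case (snoc \<sigma> u)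
  have "lstate (left_da f R) (u @ [\<sigma>]) = lclass f R (rep (lclass f R u) @ [\<sigma>])"
    using snoc by (simp add: lstate_append left_da_def)
  also have "\<dots> = lclass f R (u @ [\<sigma>])"
    using simL_snoc[OF simL_sym[OF rep_lclass]] lclass_eq_iff by metis
  finally show ?case .
qed

lemma omega_wd: assumes s: "simL f R u u'"
  shows "lquot (fhat f R (trans R q \<sigma>) u) (fhat f R q (u @ [\<sigma>]))
       = lquot (fhat f R (trans R q \<sigma>) u') (fhat f R q (u' @ [\<sigma>]))"
proof (cases "Sset f R q (u @ [\<sigma>]) = {}")
  case True
  then have "Sset f R q (u' @ [\<sigma>]) = {}" using Sset_ne_simL[OF s] by blast
  have "fhat f R q (u @ [\<sigma>]) = []" "fhat f R q (u' @ [\<sigma>]) = []"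
    using True \<open>Sset f R q (u' @ [\<sigma>]) = {}\<close> by (simp_all only: fhat_Sset lcp_empty)
  then show ?thesis by (simp only: lquot_def drop_Nil)
next
  case False
  then have F': "Sset f R q (u' @ [\<sigma>]) \<noteq> {}" using Sset_ne_simL[OF s] by blast
  have "lquot (fhat f R (trans R q \<sigma>) u) (fhat f R q (u @ [\<sigma>])) = lcp_set (Zset f R q \<sigma> u)"
    unfolding fhat_snoc[OF False] by (rule lquot_self)
  moreover have "lquot (fhat f R (trans R q \<sigma>) u') (fhat f R q (u' @ [\<sigma>])) = lcp_set (Zset f R q \<sigma> u')"
    unfolding fhat_snoc[OF F'] by (rule lquot_self)
  ultimately show ?thesis using Zset_simL[OF s] by (simp only:)
qed



definition alphaB where "alphaB B x y = lam B (rstate (rgt B) (x @ y)) @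
  concat (map (\<lambda>k. omega B (lstate (lft B) (take k x)) (x ! k) (rstate (rgt B) (drop (Suc k) x @ y))) [0..<length x])"

definition betaB where "betaB B s y =
  concat (map (\<lambda>k. omega B (foldl (trans (lft B)) s (take k y)) (y ! k) (rstate (rgt B) (drop (Suc k) y))) [0..<length y])
  @ rho B (foldl (trans (lft B)) s y)"

lemma concat_map_upt_split:
  "concat (map F [0..<m + n]) = concat (map F [0..<m]) @ concat (map (\<lambda>k. F (m + k)) [0..<n])"
proof -
  have "[0..<m + n] = [0..<m] @ [m..<m + n]" by (rule upt_add_eq_append) simp
  moreover have "[m..<m + n] = map (\<lambda>k. m + k) [0..<n]"
    using map_add_upt[of m n] by (simp add: add.commute)
  ultimately show ?thesis by (simp add: comp_def)
qed

lemma bm_run_split: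
  "bm_run B (x @ y) = (if foldl (trans (lft B)) (lstate (lft B) x) y \<in> final (lft B)
      then Some (alphaB B x y @ betaB B (lstate (lft B) x) y) else None)"
proof -
  let ?F = "\<lambda>k. omega B (lstate (lft B) (take k (x @ y))) ((x @ y) ! k) (rstate (rgt B) (drop (Suc k) (x @ y)))"
  have 1: "map ?F [0..<length x] = map (\<lambda>k. omega B (lstate (lft B) (take k x)) (x ! k) (rstate (rgt B) (drop (Suc k) x @ y))) [0..<length x]"
    by (rule map_cong) (auto simp: nth_append)
  have 2: "map (\<lambda>k. ?F (length x + k)) [0..<length y] = map (\<lambda>k. omega B (foldl (trans (lft B)) (lstate (lft B) x) (take k y)) (y ! k) (rstate (rgt B) (drop (Suc k) y))) [0..<length y]"
    by (rule map_cong) (auto simp: nth_append lstate_append)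
  have "concat (map ?F [0..<length (x @ y)]) = concat (map ?F [0..<length x]) @ concat (map (\<lambda>k. ?F (length x + k)) [0..<length y])"
    using concat_map_upt_split[of ?F "length x" "length y"] by simp
  then show ?thesis unfolding bm_run_def alphaB_def betaB_def lstate_append[of "lft B" x y] 1 2
    by simp
qed

lemma alphaB_cong: "rstate (rgt B) y = rstate (rgt B) y' \<Longrightarrow> alphaB B x y = alphaB B x y'"
  unfolding alphaB_def by (simp add: rstate_append)

lemma key:
  assumes fac: "\<And>u w. f (u @ w) = (if D (s u) w then Some (\<alpha> u w @ \<beta> (s u) w) else None)"
    and cong: "\<And>u w w'. rstate R w = rstate R w' \<Longrightarrow> \<alpha> u w = \<alpha> u w'"
    and eq: "s u = s v"
  shows "simL f R u v"
proof -
  define T where "T t q = {\<beta> t v' | v'. rstate R v' = q \<and> D t v'}" for t q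
  have comp: "lquot (fhat f R (rstate R w) a) x = lquot (lcp_set (T (s a) (rstate R w))) (\<beta> (s a) w)"
    if x: "f (a @ w) = Some x" for a w x
  proof -
    have D: "D (s a) w" and xe: "x = \<alpha> a w @ \<beta> (s a) w" using x fac[of a w] by (auto split: if_splits)
    have S: "Sset f R (rstate R w) a = (@) (\<alpha> a w) ` T (s a) (rstate R w)"
    proof (intro equalityI subsetI)
      fix y assume "y \<in> Sset f R (rstate R w) a"
      then obtain v' where v': "rstate R v' = rstate R w" "f (a @ v') = Some y" by (auto simp: Sset_def)
      have "D (s a) v'" "y = \<alpha> a v' @ \<beta> (s a) v'" using v'(2) fac[of a v'] by (auto split: if_splits)
      moreover have "\<alpha> a v' = \<alpha> a w" using cong v'(1) by blast
      ultimately show "y \<in> (@) (\<alpha> a w) ` T (s a) (rstate R w)" using v'(1) unfolding T_def by blast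
    next
      fix y assume "y \<in> (@) (\<alpha> a w) ` T (s a) (rstate R w)"
      then obtain v' where v': "y = \<alpha> a w @ \<beta> (s a) v'" "rstate R v' = rstate R w" "D (s a) v'"
        unfolding T_def by blast
      have "\<alpha> a v' = \<alpha> a w" using cong v'(2) by blast
      then have "f (a @ v') = Some y" using v' fac[of a v'] by simp
      then show "y \<in> Sset f R (rstate R w) a" using v'(2) unfolding Sset_def by blast
    qed
    have ne: "T (s a) (rstate R w) \<noteq> {}" using D unfolding T_def by blast
    have "fhat f R (rstate R w) a = \<alpha> a w @ lcp_set (T (s a) (rstate R w))"
      unfolding fhat_Sset S by (rule lcp_prepend[OF ne])
    then show ?thesis using xe by (simp add: lquot_app)
  qed
  show ?thesis unfolding simL_def
  proof (intro allI conjI impI)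
    fix w
    show "(f (u @ w) \<noteq> None) = (f (v @ w) \<noteq> None)" using fac[of u w] fac[of v w] eq by simp
    fix x y assume x: "f (u @ w) = Some x" and y: "f (v @ w) = Some y"
    have b: "\<beta> (s u) w = \<beta> (s v) w" using eq by simp
    show "lquot (fhat f R (rstate R w) u) x = lquot (fhat f R (rstate R w) v) y"
      unfolding comp[OF x] comp[OF y] eq ..
  qed
qed

lemma left_coarsest:
  assumes real: "realizes B f" and rl: "right_le R (rgt B)"
  shows "left_le (lft B) (left_da f R)"
  unfolding left_le_def lstate_left_da lclass_eq_iff
proof (intro allI impI)
  fix u v assume e: "lstate (lft B) u = lstate (lft B) v"
  show "simL f R u v"
  proof (rule key[where s="lstate (lft B)" and
        D="\<lambda>t w. foldl (trans (lft B)) t w \<in> final (lft B)" and \<alpha>="alphaB B" and \<beta>="betaB B"])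
    show "f (a @ w) = (if foldl (trans (lft B)) (lstate (lft B) a) w \<in> final (lft B)
          then Some (alphaB B a w @ betaB B (lstate (lft B) a) w) else None)" for a w
      using real bm_run_split[of B a w] unfolding realizes_def by simp
    show "alphaB B a w = alphaB B a w'" if "rstate R w = rstate R w'" for a w w'
      using rl that alphaB_cong unfolding right_le_def by blast
    show "lstate (lft B) u = lstate (lft B) v" by (rule e)
  qed
qed



lemma rev_upt_map: "rev [0..<n] = map (\<lambda>k. n - Suc k) [0..<n]"
proof (induction n)
  case 0 then show ?case by simp
next
  case (Suc n)
  have "map (\<lambda>k. Suc n - Suc k) [0..<Suc n] = n # map (\<lambda>k. n - Suc k) [0..<n]"
    by (simp add: upt_conv_Cons map_Suc_upt[symmetric] comp_def del: upt_Suc)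
  then show ?case using Suc by simp
qed

lemma mirror_run:
  assumes bm: "is_bimachine B"
  shows "bm_run (mirror_bm B) u = map_option rev (bm_run B (rev u))"
proof -
  let ?r = "rev u" let ?n = "length u"
  have fin: "(lstate (rgt B) u \<in> final (rgt B)) = (lstate (lft B) ?r \<in> final (lft B))"
    using bm unfolding is_bimachine_def by (metis rstate_rev rev_rev_ident)
  let ?G = "\<lambda>k. omega B (lstate (lft B) (take k ?r)) (?r ! k) (rstate (rgt B) (drop (Suc k) ?r))"
  let ?H = "\<lambda>k. rev (omega B (rstate (lft B) (drop (Suc k) u)) (u ! k) (lstate (rgt B) (take k u)))"
  have "rev (concat (map ?G [0..<length ?r])) = concat (map (\<lambda>k. rev (?G (?n - Suc k))) [0..<?n])"
    by (simp add: rev_concat rev_map rev_upt_map comp_def)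
  also have "\<dots> = concat (map ?H [0..<?n])"
  proof (rule arg_cong[where f=concat], rule map_cong[OF refl])
    fix k assume "k \<in> set [0..<?n]" then have k: "k < ?n" by simp
    have 1: "take (?n - Suc k) ?r = rev (drop (Suc k) u)" using k by (simp add: take_rev)
    have 2: "?r ! (?n - Suc k) = u ! k" using k by (simp add: rev_nth)
    have 3: "drop (Suc (?n - Suc k)) ?r = rev (take k u)" using k by (simp add: drop_rev Suc_diff_Suc)
    show "rev (?G (?n - Suc k)) = ?H k" unfolding 1 2 3 by (simp add: rstate_rev)
  qed
  finally have mid: "rev (concat (map ?G [0..<length ?r])) = concat (map ?H [0..<?n])" .
  show ?thesis
    unfolding bm_run_def mirror_bm_def using fin mid by (simp add: rstate_rev)
qed

lemma is_bimachine_mirror: "is_bimachine B \<Longrightarrow> is_bimachine (mirror_bm B)"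
  unfolding is_bimachine_def mirror_bm_def by (simp add: rstate_rev)

lemma mirror_f_mirror_f: "mirror_f (mirror_f f) = f"
  by (rule ext) (simp add: mirror_f_def option.map_comp comp_def option.map_ident)

lemma mirror_realizes: "is_bimachine B \<Longrightarrow> realizes B f \<Longrightarrow> realizes (mirror_bm B) (mirror_f f)"
  unfolding realizes_def by (simp add: mirror_run mirror_f_def)

lemma lft_Right_f: "lft (Right_f f B) = lft B"
  by (simp add: Right_f_def mirror_bm_def Left_f_def left_bm_def)

lemma rgt_Right_f: "rgt (Right_f f B) = left_da (mirror_f f) (lft B)"
  by (simp add: Right_f_def mirror_bm_def Left_f_def left_bm_def)

lemma lft_Left_f: "lft (Left_f f B) = left_da f (rgt B)"
  by (simp add: Left_f_def left_bm_def)

lemma rgt_Left_f: "rgt (Left_f f B) = rgt B"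
  by (simp add: Left_f_def left_bm_def)

lemma right_coarsest:
  assumes bm: "is_bimachine B" and real: "realizes B f" and ll: "left_le L (lft B)"
  shows "right_le (rgt B) (left_da (mirror_f f) L)"
proof -
  have r: "realizes (mirror_bm B) (mirror_f f)" by (rule mirror_realizes[OF bm real])
  have "right_le L (rgt (mirror_bm B))" using ll unfolding left_le_right_le by (simp add: mirror_bm_def)
  then have "left_le (lft (mirror_bm B)) (left_da (mirror_f f) L)" by (rule left_coarsest[OF r])
  then show ?thesis unfolding left_le_right_le by (simp add: mirror_bm_def)
qed



lemma telescope:
  assumes "\<And>k. k < n \<Longrightarrow> prefix (g k) (g (Suc k))" "m \<le> n"
  shows "g 0 @ concat (map (\<lambda>k. lquot (g k) (g (Suc k))) [0..<m]) = g m"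
  using assms(2)
proof (induction m)
  case 0 then show ?case by simp
next
  case (Suc m)
  then have "g 0 @ concat (map (\<lambda>k. lquot (g k) (g (Suc k))) [0..<Suc m])
     = g m @ lquot (g m) (g (Suc m))" by simp
  also have "\<dots> = g (Suc m)" using assms(1) Suc.prems by (simp add: lquot_prefix)
  finally show ?case .
qed

lemma dom_iff_final:
  assumes bm: "is_bimachine B" and real: "realizes B f"
  shows "f u \<noteq> None \<longleftrightarrow> rstate (rgt B) u \<in> final (rgt B)"
proof -
  have "f u = bm_run B u" using real unfolding realizes_def by simp
  then have "f u \<noteq> None \<longleftrightarrow> lstate (lft B) u \<in> final (lft B)" unfolding bm_run_def by simp
  then show ?thesis using bm unfolding is_bimachine_def by simp
qed

lemma lclass_finite:
  assumes bm: "is_bimachine B" and real: "realizes B f"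
  shows "finite (range (lclass f (rgt B)))"
proof -
  let ?L = "lft B" let ?R = "rgt B"
  have ll: "left_le ?L (left_da f ?R)" using left_coarsest[OF real right_le_refl] .
  define g where "g s = lclass f ?R (SOME u. lstate ?L u = s)" for s
  have "range (lclass f ?R) \<subseteq> g ` states ?L"
  proof
    fix C assume "C \<in> range (lclass f ?R)"
    then obtain u where u: "C = lclass f ?R u" by blast
    have ex: "\<exists>u'. lstate ?L u' = lstate ?L u" by blast
    have "lstate ?L (SOME u'. lstate ?L u' = lstate ?L u) = lstate ?L u" using someI_ex[OF ex] .
    then have "g (lstate ?L u) = C" using ll u unfolding g_def left_le_def lstate_left_da by blast
    moreover have "lstate ?L u \<in> states ?L" using bm lstate_in unfolding is_bimachine_def by blast
    ultimately show "C \<in> g ` states ?L" by blast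
  qed
  moreover have "finite (states ?L)" using bm unfolding is_bimachine_def da_wf_def by blast
  ultimately show ?thesis using finite_surj by blast
qed

lemma left_bm_bimachine:
  assumes bm: "is_bimachine B" and real: "realizes B f"
  shows "is_bimachine (left_bm f (rgt B))"
proof -
  let ?R = "rgt B"
  have wf: "da_wf (left_da f ?R)"
    unfolding da_wf_def using lclass_finite[OF bm real] by (auto simp: left_da_def)
  have fin: "lstate (left_da f ?R) u \<in> final (left_da f ?R) \<longleftrightarrow> rstate ?R u \<in> final ?R" for u
  proof -
    have "lstate (left_da f ?R) u \<in> final (left_da f ?R) \<longleftrightarrow> f u \<noteq> None"
    proof
      assume "lstate (left_da f ?R) u \<in> final (left_da f ?R)"
      then have "lclass f ?R u \<in> {lclass f ?R u' | u'. f u' \<noteq> None}"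
        by (simp only: lstate_left_da) (simp add: left_da_def)
      then obtain u' where "lclass f ?R u = lclass f ?R u'" "f u' \<noteq> None" by blast
      then have "simL f ?R u u'" "f (u' @ []) \<noteq> None" using lclass_eq_iff[THEN iffD1] by auto
      then show "f u \<noteq> None" unfolding simL_def by (metis append_Nil2)
    next
      assume "f u \<noteq> None" then show "lstate (left_da f ?R) u \<in> final (left_da f ?R)"
        by (simp only: lstate_left_da) (auto simp: left_da_def)
    qed
    then show ?thesis using dom_iff_final[OF bm real] by simp
  qed
  show ?thesis unfolding is_bimachine_def using wf bm fin
    by (simp add: left_bm_def is_bimachine_def)
qed

lemma left_bm_realizes:
  assumes bm: "is_bimachine B" and real: "realizes B f"
  shows "realizes (left_bm f (rgt B)) f"
  unfolding realizes_def
proof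
  fix u
  let ?R = "rgt B" let ?M = "left_bm f (rgt B)"
  have finM: "lstate (lft ?M) u \<in> final (lft ?M) \<longleftrightarrow> f u \<noteq> None"
    using left_bm_bimachine[OF bm real] dom_iff_final[OF bm real]
    unfolding is_bimachine_def by (simp add: left_bm_def)
  show "bm_run ?M u = f u"
  proof (cases "f u")
    case None then show ?thesis using finM unfolding bm_run_def by simp
  next
    case (Some y)
    let ?n = "length u"
    define g where "g k = fhat f ?R (rstate ?R (drop k u)) (take k u)" for k
    have tm: "omega ?M (lstate (lft ?M) (take k u)) (u ! k) (rstate ?R (drop (Suc k) u))
        = lquot (g k) (g (Suc k))" if k: "k < ?n" for k
    proof -
      let ?C = "lclass f ?R (take k u)"
      let ?q = "rstate ?R (drop (Suc k) u)"
      have s: "simL f ?R (rep ?C) (take k u)" using simL_sym[OF rep_lclass] .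
      have e1: "trans ?R ?q (u ! k) = rstate ?R (drop k u)"
        using k by (simp add: rstate_Cons[symmetric] Cons_nth_drop_Suc)
      have e2: "take k u @ [u ! k] = take (Suc k) u" using k by (simp add: take_Suc_conv_app_nth)
      have "omega ?M (lstate (lft ?M) (take k u)) (u ! k) ?q
          = lquot (fhat f ?R (trans ?R ?q (u ! k)) (rep ?C)) (fhat f ?R ?q (rep ?C @ [u ! k]))"
        by (simp add: left_bm_def lstate_left_da)
      also have "\<dots> = lquot (fhat f ?R (trans ?R ?q (u ! k)) (take k u)) (fhat f ?R ?q (take k u @ [u ! k]))"
        by (rule omega_wd[OF s])
      finally show ?thesis unfolding e1 e2 g_def by simp
    qed
    have pre: "prefix (g k) (g (Suc k))" if k: "k < ?n" for k
    proof -
      let ?q = "rstate ?R (drop (Suc k) u)"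
      have e1: "trans ?R ?q (u ! k) = rstate ?R (drop k u)"
        using k by (simp add: rstate_Cons[symmetric] Cons_nth_drop_Suc)
      have e2: "take k u @ [u ! k] = take (Suc k) u" using k by (simp add: take_Suc_conv_app_nth)
      have "f ((take k u @ [u ! k]) @ drop (Suc k) u) = Some y"
        using Some k by (simp add: e2)
      then have ne: "Sset f ?R ?q (take k u @ [u ! k]) \<noteq> {}" unfolding Sset_def by blast
      have "g (Suc k) = g k @ lcp_set (Zset f ?R ?q (u ! k) (take k u))"
        using fhat_snoc[OF ne] unfolding g_def e1 e2 by simp
      then show ?thesis by simp
    qed
    have gn: "g ?n = fhat f ?R (rstate ?R []) u" unfolding g_def by simp
    have py: "prefix (g ?n) y" unfolding gn using fhat_prefix[where v="[]", of f u y ?R] Some by simp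
    have g0: "g 0 = fhat f ?R (rstate ?R u) []" unfolding g_def by simp
    have sr: "simL f ?R u (rep (lclass f ?R u))" by (rule rep_lclass)
    then obtain y' where y': "f (rep (lclass f ?R u)) = Some y'"
      using Some unfolding simL_def by (metis append_Nil2 not_None_eq)
    have "lquot (fhat f ?R (rstate ?R []) u) y = lquot (fhat f ?R (rstate ?R []) (rep (lclass f ?R u))) y'"
      using sr Some y' unfolding simL_def by (metis append_Nil2)
    then have rho: "rho ?M (lstate (lft ?M) u) = lquot (g ?n) y"
      using y' unfolding gn by (simp add: left_bm_def lstate_left_da rstate_Nil)
    have lam: "lam ?M (rstate (rgt ?M) u) = g 0" unfolding g0 by (simp add: left_bm_def)
    have mid: "map (\<lambda>k. omega ?M (lstate (lft ?M) (take k u)) (u ! k) (rstate (rgt ?M) (drop (Suc k) u))) [0..<?n]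
        = map (\<lambda>k. lquot (g k) (g (Suc k))) [0..<?n]"
    proof (rule map_cong[OF refl])
      fix k assume "k \<in> set [0..<?n]"
      then have "k < ?n" by simp
      moreover have "rgt ?M = ?R" by (simp add: left_bm_def)
      ultimately show "omega ?M (lstate (lft ?M) (take k u)) (u ! k) (rstate (rgt ?M) (drop (Suc k) u)) = lquot (g k) (g (Suc k))"
        using tm by simp
    qed
    have "bm_run ?M u = Some (g 0 @ concat (map (\<lambda>k. lquot (g k) (g (Suc k))) [0..<?n]) @ lquot (g ?n) y)"
      unfolding bm_run_def using finM Some by (simp only: mid lam rho) simp
    also have "\<dots> = Some (g ?n @ lquot (g ?n) y)"
      using telescope[of ?n g ?n, OF pre order_refl] by (metis append.assoc)
    also have "\<dots> = Some y" using py by (simp add: lquot_prefix)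
    finally show ?thesis using Some by simp
  qed
qed



lemma Left_ok: assumes "is_bimachine B" "realizes B f"
  shows "is_bimachine (Left_f f B) \<and> realizes (Left_f f B) f"
  unfolding Left_f_def using left_bm_bimachine[OF assms] left_bm_realizes[OF assms] by blast

lemma Right_ok: assumes bm: "is_bimachine B" and r: "realizes B f"
  shows "is_bimachine (Right_f f B) \<and> realizes (Right_f f B) f"
proof -
  have b1: "is_bimachine (mirror_bm B)" by (rule is_bimachine_mirror[OF bm])
  have r1: "realizes (mirror_bm B) (mirror_f f)" by (rule mirror_realizes[OF bm r])
  have b2: "is_bimachine (Left_f (mirror_f f) (mirror_bm B))"
    and r2: "realizes (Left_f (mirror_f f) (mirror_bm B)) (mirror_f f)" using Left_ok[OF b1 r1] by auto
  have "is_bimachine (mirror_bm (Left_f (mirror_f f) (mirror_bm B)))" by (rule is_bimachine_mirror[OF b2])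
  moreover have "realizes (mirror_bm (Left_f (mirror_f f) (mirror_bm B))) (mirror_f (mirror_f f))"
    by (rule mirror_realizes[OF b2 r2])
  ultimately show ?thesis unfolding Right_f_def mirror_f_mirror_f by blast
qed

theorem proposition3p5:
  fixes B :: "('l, 'r, 'a) bimachine" and f :: "'a list \<Rightarrow> 'a list option"
  assumes "finite (UNIV :: 'a set)"
    and "is_bimachine B"
    and "realizes B f"
  shows "minimal_bm f (Left_f f (Right_f f B)) \<and> minimal_bm f (Right_f f (Left_f f B))
         \<and> bm_le B (Left_f f (Right_f f B)) \<and> bm_le B (Right_f f (Left_f f B))"
proof -
  note bm = assms(2) and r = assms(3)
  let ?L = "lft B" let ?R = "rgt B"
  let ?B1 = "Right_f f B"
  let ?R1 = "left_da (mirror_f f) ?L"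
  let ?B2 = "Left_f f ?B1"
  let ?L2 = "left_da f ?R1"
  have ok1: "is_bimachine ?B1" "realizes ?B1 f" using Right_ok[OF bm r] by auto
  have ok2: "is_bimachine ?B2" "realizes ?B2 f" using Left_ok[OF ok1] by auto
  have l2: "lft ?B2 = ?L2" and r2: "rgt ?B2 = ?R1" by (simp_all add: lft_Left_f rgt_Left_f rgt_Right_f)
  have lLL2: "left_le ?L ?L2"
    using left_coarsest[OF ok1(2), of ?R1] right_le_refl[of ?R1] by (simp add: lft_Right_f rgt_Right_f)
  have rRR1: "right_le ?R ?R1" using right_coarsest[OF bm r left_le_refl] .
  have le2: "bm_le B ?B2" unfolding bm_le_def l2 r2 using lLL2 rRR1 by blast
  have min2: "minimal_bm f ?B2" unfolding minimal_bm_def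
  proof (intro conjI notI)
    show "is_bimachine ?B2" "realizes ?B2 f" by (rule ok2(1), rule ok2(2))
    assume "\<exists>B' :: (nat, nat, 'a) bimachine. is_bimachine B' \<and> realizes B' f \<and> bm_le ?B2 B' \<and> \<not> bm_le B' ?B2"
    then obtain B' :: "(nat, nat, 'a) bimachine" where B': "is_bimachine B'" "realizes B' f"
      "bm_le ?B2 B'" "\<not> bm_le B' ?B2" by blast
    have a: "left_le ?L2 (lft B')" "right_le ?R1 (rgt B')" using B'(3) unfolding bm_le_def l2 r2 by auto
    have "left_le (lft B') ?L2" by (rule left_coarsest[OF B'(2) a(2)])
    moreover have "right_le (rgt B') ?R1"
      by (rule right_coarsest[OF B'(1) B'(2) left_le_trans[OF lLL2 a(1)]])
    ultimately have "bm_le B' ?B2" unfolding bm_le_def l2 r2 by blast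
    with B'(4) show False by blast
  qed
  let ?B3 = "Left_f f B"
  let ?L3 = "left_da f ?R"
  let ?B4 = "Right_f f ?B3"
  let ?R4 = "left_da (mirror_f f) ?L3"
  have ok3: "is_bimachine ?B3" "realizes ?B3 f" using Left_ok[OF bm r] by auto
  have ok4: "is_bimachine ?B4" "realizes ?B4 f" using Right_ok[OF ok3] by auto
  have l4: "lft ?B4 = ?L3" and r4: "rgt ?B4 = ?R4" by (simp_all add: lft_Right_f rgt_Right_f lft_Left_f)
  have lLL3: "left_le ?L ?L3" by (rule left_coarsest[OF r right_le_refl])
  have rRR4: "right_le ?R ?R4"
    using right_coarsest[OF ok3 left_le_refl] by (simp add: lft_Left_f rgt_Left_f)
  have le4: "bm_le B ?B4" unfolding bm_le_def l4 r4 using lLL3 rRR4 by blast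
  have min4: "minimal_bm f ?B4" unfolding minimal_bm_def
  proof (intro conjI notI)
    show "is_bimachine ?B4" "realizes ?B4 f" by (rule ok4(1), rule ok4(2))
    assume "\<exists>B' :: (nat, nat, 'a) bimachine. is_bimachine B' \<and> realizes B' f \<and> bm_le ?B4 B' \<and> \<not> bm_le B' ?B4"
    then obtain B' :: "(nat, nat, 'a) bimachine" where B': "is_bimachine B'" "realizes B' f"
      "bm_le ?B4 B'" "\<not> bm_le B' ?B4" by blast
    have a: "left_le ?L3 (lft B')" "right_le ?R4 (rgt B')" using B'(3) unfolding bm_le_def l4 r4 by auto
    have "left_le (lft B') ?L3" by (rule left_coarsest[OF B'(2) right_le_trans[OF rRR4 a(2)]])
    moreover have "right_le (rgt B') ?R4" by (rule right_coarsest[OF B'(1) B'(2) a(1)])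
    ultimately have "bm_le B' ?B4" unfolding bm_le_def l4 r4 by blast
    with B'(4) show False by blast
  qed
  show ?thesis using min2 min4 le2 le4 by blast
qed

end
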